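(* (Dual SDP upper bound for the $\ell_\infty$-FGL of two-layer networks.) Let $W\in\mathbb{R}^{n\times m}$, $u\in\mathbb{R}^{1\times n}$ and real numbers $a\le b$. Suppose $\zeta\in\mathbb{R}$, $\lambda\in\mathbb{R}^n_+$, $\tau\in\mathbb{R}^m_+$ are such that, with $T_1=\mathrm{diag}(\lambda)$ and $T_2=\mathrm{diag}(\tau)$, the $(1+m+n)\times(1+m+n)$ block matrix satisfies $$\begin{pmatrix}\sum_{j=1}^m\tau_j-\zeta& 0& u\\ 0& -2ab\,W^TT_1W-T_2& (a+b)W^TT_1\\ u^T& (a+b)T_1W& -2T_1\end{pmatrix}\preceq0 .$$ Then $$\frac{\zeta}{2}\;\ge\;\max_{y\in[a,b]^n}\big\|W^T\mathrm{diag}(y)u^T\big\|_1 .$$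
   Context: $\mathrm{diag}(v)$ is the diagonal matrix with diagonal $v$; $P\preceq0$ means $-P$ is positive semidefinite; $\mathbb{R}_+=[0,\infty)$. For ReLU ($a=0,b=1$) the right-hand side is at least the $\ell_\infty$ formal global Lipschitz constant $\max_{y\in\{0,1\}^n}\|W^T\mathrm{diag}(y)u^T\|_1$ of $x\mapsto u\,\mathrm{ReLU}(Wx)$. *)

theory Defs
  imports "HOL-Analysis.Analysis"
begin

definition diag_mat :: "real ^ 'n \<Rightarrow> real ^ 'n ^ 'n" where
  "diag_mat v = (\<chi> i j. if i = j then v $ i else 0)"

definition psd_mat :: "real ^ 'k ^ 'k \<Rightarrow> bool" where
  "psd_mat M \<longleftrightarrow> transpose M = M \<and> (\<forall>x. 0 \<le> x \<bullet> (M *v x))"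

definition nsd_mat :: "real ^ 'k ^ 'k \<Rightarrow> bool" where
  "nsd_mat P \<longleftrightarrow> psd_mat (- P)"

text \<open>The (1+m+n) x (1+m+n) block matrix of the dual SDP, with index type
  unit + ('m + 'n): the unit block is the scalar row/column, 'm the input
  block and 'n the hidden block.  W :: real^'m^'n is an n x m matrix, u a
  row vector of length n.\<close>
definition dual_block ::
  "real ^ 'm ^ 'n \<Rightarrow> real ^ 'n \<Rightarrow> real \<Rightarrow> real \<Rightarrow> real \<Rightarrow> real ^ 'n \<Rightarrow> real ^ 'm
   \<Rightarrow> real ^ (unit + ('m + 'n)) ^ (unit + ('m + 'n))" where
  "dual_block W u a b zeta lam tau =
    (let T1 = diag_mat lam; T2 = diag_mat tau;
         B22 = (- (2 * a * b)) *\<^sub>R (transpose W ** T1 ** W) - T2;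
         B23 = (a + b) *\<^sub>R (transpose W ** T1);
         B32 = (a + b) *\<^sub>R (T1 ** W);
         B33 = (- 2) *\<^sub>R T1
     in (\<chi> p q. (case p of
          Inl _ \<Rightarrow> (case q of Inl _ \<Rightarrow> sum (\<lambda>j. tau $ j) UNIV - zeta
                             | Inr (Inl j) \<Rightarrow> 0
                             | Inr (Inr i) \<Rightarrow> u $ i)
        | Inr (Inl j) \<Rightarrow> (case q of Inl _ \<Rightarrow> 0
                             | Inr (Inl j') \<Rightarrow> B22 $ j $ j'
                             | Inr (Inr i) \<Rightarrow> B23 $ j $ i)
        | Inr (Inr i) \<Rightarrow> (case q of Inl _ \<Rightarrow> u $ i
                             | Inr (Inl j) \<Rightarrow> B32 $ i $ j
                             | Inr (Inr i') \<Rightarrow> B33 $ i $ i'))))"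

definition l1_norm :: "real ^ 'k \<Rightarrow> real" where
  "l1_norm x = (\<Sum>j\<in>UNIV. \<bar>x $ j\<bar>)"

end

theory Submission imports Defs begin

lemma sum_UNIV_plus: "sum (f :: 'a::finite + 'b::finite \<Rightarrow> real) UNIV = sum (\<lambda>x. f (Inl x)) UNIV + sum (\<lambda>x. f (Inr x)) UNIV"
proof -
  have "sum f UNIV = sum f (UNIV <+> UNIV)" by simp
  also have "\<dots> = sum (f o Inl) UNIV + sum (f o Inr) UNIV" by (rule sum.Plus) auto
  finally show ?thesis by (simp add: o_def)
qed

lemma mif1: "(x::real) * (if P then y else 0) = (if P then x*y else 0)" by simp
lemma mif2: "(if P then y else 0) * (x::real) = (if P then y*x else 0)" by simp

lemma entries:
  fixes W :: "real ^ 'm::finite ^ 'n::finite" and u lam :: "real^'n" and tau :: "real^'m" and a b zeta :: real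
  defines "M \<equiv> dual_block W u a b zeta lam tau"
  shows "M $ Inl z $ Inl z = sum (\<lambda>j. tau $ j) UNIV - zeta"
    "M $ Inl z $ Inr (Inl j) = 0"
    "M $ Inl z $ Inr (Inr i) = u $ i"
    "M $ Inr (Inl j) $ Inl z = 0"
    "M $ Inr (Inr i) $ Inl z = u $ i"
    "M $ Inr (Inl j) $ Inr (Inl j') = - 2*a*b * (\<Sum>k\<in>UNIV. W$k$j * lam$k * W$k$j') - (if j = j' then tau $ j else 0)"
    "M $ Inr (Inl j) $ Inr (Inr i) = (a+b) * (W$i$j * lam$i)"
    "M $ Inr (Inr i) $ Inr (Inl j) = (a+b) * (lam$i * W$i$j)"
    "M $ Inr (Inr i) $ Inr (Inr i') = -2 * (if i = i' then lam $ i else 0)"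
  unfolding M_def dual_block_def Let_def
  by (simp_all add: matrix_matrix_mult_def diag_mat_def transpose_def
      mif1 mif2 sum.delta sum.delta' sum_distrib_left mult.assoc sum_negf)

lemma main:
  fixes W :: "real ^ 'm::finite ^ 'n::finite" and u lam :: "real^'n" and tau :: "real^'m" and a b zeta :: real
    and s :: "'m \<Rightarrow> real" and t :: "'n \<Rightarrow> real"
  defines "M \<equiv> dual_block W u a b zeta lam tau"
  defines "x \<equiv> (\<chi> p. case p of Inl _ \<Rightarrow> 1 | Inr (Inl j) \<Rightarrow> s j | Inr (Inr i) \<Rightarrow> t i) :: real^(unit+('m+'n))"
  defines "v \<equiv> (\<lambda>i. \<Sum>j\<in>UNIV. W$i$j * s j)"
  shows "x \<bullet> (M *v x) = sum (\<lambda>j. tau $ j) UNIV - zeta + 2 * (\<Sum>i\<in>UNIV. u$i * t i)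
     - (\<Sum>j\<in>UNIV. tau$j * (s j)^2) - 2*a*b*(\<Sum>i\<in>UNIV. lam$i * (v i)^2)
     + 2*(a+b)*(\<Sum>i\<in>UNIV. lam$i * v i * t i) - 2 * (\<Sum>i\<in>UNIV. lam$i * (t i)^2)"
proof -
  have e: "\<And>p q. M $ p $ q = dual_block W u a b zeta lam tau $ p $ q" by (simp add: M_def)
  have Q: "x \<bullet> (M *v x) = (\<Sum>p\<in>UNIV. x$p * (\<Sum>q\<in>UNIV. M$p$q * x$q))"
    by (simp add: inner_vec_def matrix_vector_mult_def)
  have h22: "(\<Sum>j\<in>UNIV. s j * (\<Sum>j'\<in>UNIV. M $ Inr (Inl j) $ Inr (Inl j') * s j'))
      = - 2*a*b*(\<Sum>i\<in>UNIV. lam$i * (v i)^2) - (\<Sum>j\<in>UNIV. tau$j * (s j)^2)"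
  proof -
    have "(\<Sum>j\<in>UNIV. s j * (\<Sum>j'\<in>UNIV. M $ Inr (Inl j) $ Inr (Inl j') * s j'))
      = (\<Sum>j\<in>UNIV. \<Sum>j'\<in>UNIV. - 2*a*b * (\<Sum>k\<in>UNIV. s j * W$k$j * lam$k * W$k$j' * s j'))
        - (\<Sum>j\<in>UNIV. tau$j * (s j)^2)"
      unfolding e entries
      by (simp add: algebra_simps sum_distrib_left sum_subtractf mif1 mif2 power2_eq_square sum.distrib)
    also have "\<dots> = - 2*a*b*(\<Sum>k\<in>UNIV. lam$k * (v k)^2) - (\<Sum>j\<in>UNIV. tau$j * (s j)^2)"
    proof -
      have "(\<Sum>j\<in>UNIV. \<Sum>j'\<in>UNIV. (\<Sum>k\<in>UNIV. s j * W$k$j * lam$k * W$k$j' * s j'))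
         = (\<Sum>k\<in>UNIV. lam$k * (v k)^2)"
        unfolding v_def power2_eq_square sum_distrib_left sum_distrib_right
        apply (subst sum.swap)
        apply (rule trans[OF sum.swap])
        apply (rule sum.cong, rule refl)
        apply (rule trans[OF _ sum.swap])
        apply (rule sum.cong, rule refl)
        apply (rule sum.cong, rule refl)
        by (simp add: algebra_simps)
      then show ?thesis by (simp only: sum_negf sum_distrib_left[symmetric])
    qed
    finally show ?thesis .
  qed
  have h23: "(\<Sum>j\<in>UNIV. s j * (\<Sum>i\<in>UNIV. M $ Inr (Inl j) $ Inr (Inr i) * t i))
      = (a+b)*(\<Sum>i\<in>UNIV. lam$i * v i * t i)"
    unfolding e entries v_def sum_distrib_left sum_distrib_right
    apply (subst sum.swap)
    by (rule sum.cong, rule refl, rule sum.cong, rule refl, simp add: algebra_simps)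
  have h32: "(\<Sum>i\<in>UNIV. t i * (\<Sum>j\<in>UNIV. M $ Inr (Inr i) $ Inr (Inl j) * s j))
      = (a+b)*(\<Sum>i\<in>UNIV. lam$i * v i * t i)"
    unfolding e entries v_def sum_distrib_left sum_distrib_right
    by (rule sum.cong, rule refl, rule sum.cong, rule refl, simp add: algebra_simps)
  have h33: "(\<Sum>i\<in>UNIV. t i * (\<Sum>i'\<in>UNIV. M $ Inr (Inr i) $ Inr (Inr i') * t i'))
      = - 2 * (\<Sum>i\<in>UNIV. lam$i * (t i)^2)"
    unfolding e entries by (simp add: mif1 mif2 sum_distrib_left power2_eq_square algebra_simps)
  show ?thesis
    unfolding Q
    apply (simp add: sum_UNIV_plus x_def distrib_left sum.distrib)
    apply (simp only: e entries)
    apply (simp only: h22[unfolded e entries] h23[unfolded e entries] h32[unfolded e entries] h33[unfolded e entries])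
    apply (simp add: UNIV_unit)
    apply (simp add: mult.commute[of "t _"])
    done
qed

theorem mainTheorem9:
  fixes W :: "real ^ 'm ^ 'n" and u :: "real ^ 'n"
    and a b zeta :: real and lam :: "real ^ 'n" and tau :: "real ^ 'm"
  assumes "a \<le> b"
    and "\<forall>i. 0 \<le> lam $ i"
    and "\<forall>j. 0 \<le> tau $ j"
    and "nsd_mat (dual_block W u a b zeta lam tau)"
  shows "\<forall>y :: real ^ 'n. (\<forall>i. a \<le> y $ i \<and> y $ i \<le> b) \<longrightarrow>
           l1_norm (transpose W *v (diag_mat y *v u)) \<le> zeta / 2"
proof (intro allI impI)
  fix y :: "real ^ 'n"
  assume y: "\<forall>i. a \<le> y $ i \<and> y $ i \<le> b"
  define c where "c = transpose W *v (diag_mat y *v u)"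
  define s where "s = (\<lambda>j. if 0 \<le> c $ j then 1 else (-1::real))"
  define v where "v = (\<lambda>i. \<Sum>j\<in>UNIV. W$i$j * s j)"
  define t where "t = (\<lambda>i. y$i * v i)"
  define M where "M = dual_block W u a b zeta lam tau"
  define x :: "real^(unit+('m+'n))" where "x = (\<chi> p. case p of Inl _ \<Rightarrow> 1 | Inr (Inl j) \<Rightarrow> s j | Inr (Inr i) \<Rightarrow> t i)"
  have "0 \<le> x \<bullet> ((- M) *v x)"
    using assms(4) unfolding nsd_mat_def psd_mat_def M_def by blast
  also have "(- M) *v x = - (M *v x)"
    by (simp add: matrix_vector_mult_def vec_eq_iff sum_negf)
  finally have Q: "x \<bullet> (M *v x) \<le> 0" by simp
  have s2: "\<And>j. (s j)^2 = 1" by (simp add: s_def)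
  have Qe: "x \<bullet> (M *v x) = sum (\<lambda>j. tau $ j) UNIV - zeta + 2 * (\<Sum>i\<in>UNIV. u$i * t i)
     - (\<Sum>j\<in>UNIV. tau$j * (s j)^2) - 2*a*b*(\<Sum>i\<in>UNIV. lam$i * (v i)^2)
     + 2*(a+b)*(\<Sum>i\<in>UNIV. lam$i * v i * t i) - 2 * (\<Sum>i\<in>UNIV. lam$i * (t i)^2)"
    unfolding M_def x_def v_def by (rule main)
  have R: "a*b*(\<Sum>i\<in>UNIV. lam$i * (v i)^2) - (a+b)*(\<Sum>i\<in>UNIV. lam$i * v i * t i) + (\<Sum>i\<in>UNIV. lam$i * (t i)^2)
      = (\<Sum>i\<in>UNIV. lam$i * (v i)^2 * ((y$i - a) * (y$i - b)))"
    by (simp add: sum_distrib_left sum_subtractf[symmetric] sum.distrib[symmetric] t_def algebra_simps power2_eq_square)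
  have Rn: "(\<Sum>i\<in>UNIV. lam$i * (v i)^2 * ((y$i - a) * (y$i - b))) \<le> 0"
  proof (rule sum_nonpos)
    fix i
    have "(y$i - a) * (y$i - b) \<le> 0" using y by (simp add: mult_nonneg_nonpos)
    moreover have "0 \<le> lam$i * (v i)^2" using assms(2) by simp
    ultimately show "lam$i * (v i)^2 * ((y$i - a) * (y$i - b)) \<le> 0" by (simp add: mult_nonneg_nonpos)
  qed
  have key: "2 * (\<Sum>i\<in>UNIV. u$i * t i) \<le> zeta"
    using Q Qe R Rn s2 by (simp add: algebra_simps)
  have "(\<Sum>i\<in>UNIV. u$i * t i) = (\<Sum>j\<in>UNIV. s j * c$j)"
    unfolding t_def v_def c_def
    by (simp add: matrix_vector_mult_def diag_mat_def transpose_def mif1 mif2 sum.delta sum.delta'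
        sum_distrib_left sum_distrib_right algebra_simps cong: if_cong) (rule sum.swap)
  also have "\<dots> = l1_norm c"
    unfolding l1_norm_def s_def by (rule sum.cong) auto
  finally show "l1_norm (transpose W *v (diag_mat y *v u)) \<le> zeta / 2"
    using key c_def by simp
qed

end
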